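(* Let $\hat{\boldsymbol\mu}$ be a location estimator, assigning to every $n\times d$ data matrix a vector in $\mathbb R^d$, which is orthogonally equivariant: for all $\boldsymbol v\in\mathbb R^d$, all $d\times d$ orthogonal matrices $\boldsymbol A$ and all $n\times d$ data matrices $\boldsymbol X$, $\hat{\boldsymbol\mu}(\boldsymbol 1_n\boldsymbol v^{\top}+\boldsymbol X\boldsymbol A)=\boldsymbol v+\boldsymbol A^{\top}\hat{\boldsymbol\mu}(\boldsymbol X)$. Then whenever all rows of a data matrix $\boldsymbol X$ lie in a lower-dimensional affine subspace of $\mathbb R^d$, $\hat{\boldsymbol\mu}(\boldsymbol X)$ lies in that subspace as well. Consequently, for every $n\times d$ data matrix $\boldsymbol X$, $\varepsilon^*_n(\hat{\boldsymbol\mu},\boldsymbol X)\leqslant \lceil n/d\rceil/n$.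
   Context: Rows of the $n\times d$ data matrix are the data points; $\boldsymbol 1_n$ is the $n\times1$ vector of ones. For an integer $m\ge0$, $\boldsymbol X^m$ denotes any matrix obtained from $\boldsymbol X$ by replacing at most $m$ cells in each column by arbitrary real values. The finite-sample cellwise breakdown value is $\varepsilon^*_n(\hat{\boldsymbol\mu},\boldsymbol X)=\min\{\tfrac{m}{n}:\ \sup_{\boldsymbol X^m}\|\hat{\boldsymbol\mu}(\boldsymbol X^m)-\hat{\boldsymbol\mu}(\boldsymbol X)\|=\infty\}$. *)

theory Defs
  imports "HOL-Analysis.Analysis"
begin

text \<open>Data matrices are n x d matrices of type real^'d^'n: row i (a data point in R^d)
  is X $ i, cell (i,j) is X $ i $ j.  n = CARD('n), d = CARD('d).\<close>

definition orth_equivariant :: "(real^'d^'n \<Rightarrow> real^'d) \<Rightarrow> bool" where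
  "orth_equivariant mu \<longleftrightarrow>
     (\<forall>(v::real^'d) (A::real^'d^'d) (X::real^'d^'n). orthogonal_matrix A \<longrightarrow>
        mu ((\<chi> i. v) + X ** A) = v + transpose A *v mu X)"

definition cell_contaminations :: "nat \<Rightarrow> real^'d^'n \<Rightarrow> (real^'d^'n) set" where
  "cell_contaminations m X = {Y. \<forall>j. card {i. Y $ i $ j \<noteq> X $ i $ j} \<le> m}"

definition cellwise_breakdown :: "(real^'d^'n \<Rightarrow> real^'d) \<Rightarrow> real^'d^'n \<Rightarrow> real" where
  "cellwise_breakdown mu X =
     Inf {real m / real CARD('n) | m.
            \<not> (\<exists>B. \<forall>Y\<in>cell_contaminations m X. norm (mu Y - mu X) \<le> B)}"

end

theory Submission
  imports Defs
begin

lemma row_mult: "((X::real^'d^'n) ** A) $ i = transpose A *v (X $ i)"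
  by (simp add: vec_eq_iff matrix_matrix_mult_def matrix_vector_mult_def transpose_def mult.commute[of "X $ i $ _"])

lemma refl_facts:
  fixes z :: "real^'d"
  assumes z: "z \<noteq> 0"
  defines "R \<equiv> (\<lambda>x. x - (2 * (z \<bullet> x) / (z \<bullet> z)) *\<^sub>R z)"
  shows "orthogonal_matrix (matrix R)" "transpose (matrix R) = matrix R"
    "\<And>x. matrix R *v x = R x"
proof -
  have c: "z \<bullet> z \<noteq> 0" using z by simp
  have lin: "linear R"
    unfolding R_def by (rule linearI) (auto simp: algebra_simps inner_add_right inner_scaleR_right add_divide_distrib diff_divide_distrib)
  have "orthogonal_transformation R"
    unfolding orthogonal_transformation_def
  proof (intro conjI allI lin)
    fix v w
    show "R v \<bullet> R w = v \<bullet> w"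
      using c unfolding R_def
      by (simp add: inner_diff_left inner_diff_right inner_commute field_simps power2_eq_square)
  qed
  then show "orthogonal_matrix (matrix R)"
    using orthogonal_transformation_matrix by blast
  show "transpose (matrix R) = matrix R"
    unfolding R_def by (simp add: vec_eq_iff matrix_def transpose_def inner_axis) (simp add: axis_def ac_simps)
  show "\<And>x. matrix R *v x = R x" using lin by (simp add: matrix_works)
qed

lemma aux: "(x::'a::ab_group_add) = v + (x - w) \<Longrightarrow> v = w"
  by (metis add_diff_cancel_left' add_diff_eq diff_diff_eq2 eq_iff_diff_eq_0)

lemma part1:
  fixes mu :: "real^'d^'n \<Rightarrow> real^'d"
  assumes eq: "orth_equivariant mu" and S: "affine S" and rows: "\<forall>i. X $ i \<in> S"
  shows "mu X \<in> S"
proof -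
  define a where "a = X $ undefined"
  have aS: "a \<in> S" using rows a_def by simp
  define V where "V = (\<lambda>x. x - a) ` S"
  have sub: "subspace V" unfolding V_def using affine_diffs_subspace_subtract[OF S aS] .
  obtain y z where y: "y \<in> span V" and zo: "\<And>w. w \<in> span V \<Longrightarrow> orthogonal z w"
    and yz: "mu X - a = y + z"
    using orthogonal_subspace_decomp_exists[of V "mu X - a"] by metis
  have yV: "y \<in> V" using y sub by (metis span_eq_iff)
  have "z = 0"
  proof (rule ccontr)
    assume z: "z \<noteq> 0"
    define R where "R \<equiv> (\<lambda>x. x - (2 * (z \<bullet> x) / (z \<bullet> z)) *\<^sub>R z)"
    note rf = refl_facts[OF z, folded R_def]
    define v0 where "v0 = (2 * (z \<bullet> a) / (z \<bullet> z)) *\<^sub>R z"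
    have zrow: "z \<bullet> X $ i = z \<bullet> a" for i
    proof -
      have "X $ i - a \<in> span V" using rows unfolding V_def by (auto intro: span_base)
      then have "z \<bullet> (X $ i - a) = 0" using zo orthogonal_def by blast
      then show ?thesis by (simp add: inner_diff_right)
    qed
    have rr: "(X ** matrix R) $ i = R (X $ i)" for i
      using row_mult[of X "matrix R" i] rf(2,3) unfolding R_def by metis
    have "(\<chi> i. v0) + X ** matrix R = X"
    proof -
      have "((\<chi> i. v0) + X ** matrix R) $ i = X $ i" for i
        using rr[of i] by (simp add: R_def v0_def zrow)
      then show ?thesis by (simp add: vec_eq_iff)
    qed
    then have "mu X = v0 + transpose (matrix R) *v mu X"
      using eq rf(1) unfolding orth_equivariant_def by metis
    then have mr: "mu X = v0 + R (mu X)" using rf(2,3) unfolding R_def by metis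
    have "v0 = (2 * (z \<bullet> mu X) / (z \<bullet> z)) *\<^sub>R z"
    proof (rule aux)
      show "mu X = v0 + (mu X - (2 * (z \<bullet> mu X) / (z \<bullet> z)) *\<^sub>R z)"
        using mr unfolding R_def by blast
    qed
    then have "(2 * (z \<bullet> a) / (z \<bullet> z)) = (2 * (z \<bullet> mu X) / (z \<bullet> z))"
      unfolding v0_def using z by (metis scaleR_cancel_right)
    then have "z \<bullet> a = z \<bullet> mu X" using z by (simp add: divide_simps)
    moreover have "z \<bullet> y = 0" using zo[OF y] orthogonal_def by blast
    moreover have "z \<bullet> (mu X - a) = z \<bullet> y + z \<bullet> z" using yz by (simp add: inner_add_right)
    moreover have "z \<bullet> (mu X - a) = z \<bullet> mu X - z \<bullet> a" by (simp add: inner_diff_right)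
    ultimately have "z \<bullet> z = 0" by linarith
    then show False using z by simp
  qed
  then obtain s where "s \<in> S" "y = s - a" using yV V_def by auto
  then show ?thesis using yz \<open>z = 0\<close> by (metis add.right_neutral diff_add_cancel)
qed

lemma fiber_bound:
  fixes idx :: "'n::finite \<Rightarrow> nat" and hd :: "nat \<Rightarrow> 'd::finite"
  assumes idx: "inj idx" and hd: "bij_betw hd {0..<CARD('d)} UNIV" and m: "m > 0" and rng: "\<And>i. idx i div m < CARD('d)"
  shows "card {i. hd (idx i div m) = j} \<le> m"
proof -
  have "j \<in> hd ` {0..<CARD('d)}" using hd unfolding bij_betw_def by simp
  then obtain r where r: "r < CARD('d)" "hd r = j" by auto
  have "card {i. hd (idx i div m) = j} \<le> card {i. idx i div m = r}"
  proof (rule card_mono)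
    show "{i. hd (idx i div m) = j} \<subseteq> {i. idx i div m = r}"
    proof
      fix i assume i: "i \<in> {i. hd (idx i div m) = j}"
      show "i \<in> {i. idx i div m = r}" using i r hd rng[of i] unfolding bij_betw_def inj_on_def by auto
    qed
  qed simp
  also have "\<dots> \<le> card {r*m..<r*m+m}"
  proof (rule card_inj_on_le[of idx])
    show "inj_on idx {i. idx i div m = r}" using idx by (simp add: inj_on_def inj_def)
    show "idx ` {i. idx i div m = r} \<subseteq> {r * m..<r * m + m}"
    proof
      fix k assume "k \<in> idx ` {i. idx i div m = r}"
      then have k: "k div m = r" by auto
      have "k = (k div m) * m + k mod m" by simp
      moreover have "k mod m < m" using m by simp
      ultimately show "k \<in> {r * m..<r * m + m}" using k by auto
    qed
  qed simp
  finally show ?thesis by simp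
qed

lemma part2:
  fixes mu :: "real^'d^'n \<Rightarrow> real^'d" and X :: "real^'d^'n"
  assumes eq: "orth_equivariant mu"
  shows "cellwise_breakdown mu X
            \<le> of_int \<lceil>real CARD('n) / real CARD('d)\<rceil> / real CARD('n)"
proof -
  define n where "n = CARD('n)"
  define d where "d = CARD('d)"
  have n0: "n > 0" and d0: "d > 0" unfolding n_def d_def by simp_all
  define c where "c = \<lceil>real n / real d\<rceil>"
  have c1: "c \<ge> 1" unfolding c_def using n0 d0 by (simp add: le_ceiling_iff)
  define m where "m = nat c"
  have m0: "m > 0" using c1 m_def by simp
  have rm: "real m = of_int c" using c1 m_def by simp
  have "real n / real d \<le> real m" using rm c_def by simp
  then have "real n \<le> real m * real d" using d0 by (simp add: divide_le_eq)
  then have nmd: "n \<le> m * d" by (metis of_nat_le_iff of_nat_mult)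
  obtain idx :: "'n \<Rightarrow> nat" where idx: "bij_betw idx UNIV {0..<n}"
    using ex_bij_betw_finite_nat[of "UNIV::'n set"] n_def by auto
  obtain hd :: "nat \<Rightarrow> 'd" where hd: "bij_betw hd {0..<d} UNIV"
    using ex_bij_betw_nat_finite[of "UNIV::'d set"] d_def by auto
  have idxi: "inj idx" using idx bij_betw_def by blast
  have rng: "idx i div m < d" for i
  proof -
    have "idx i < n" using idx unfolding bij_betw_def by auto
    then have "idx i < m * d" using nmd by simp
    then show ?thesis by (simp add: div_less_iff_less_mult m0 mult.commute)
  qed
  define g where "g i = hd (idx i div m)" for i
  have fib: "card {i. g i = j} \<le> m" for j
    unfolding g_def using fiber_bound[OF idxi hd[unfolded d_def] m0] rng d_def by blast
  define Y where "Y t = (\<chi> i. \<chi> j. if j = g i then t - (\<Sum>k\<in>UNIV-{j}. X$i$k) else X$i$j)" for t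
  have Yc: "Y t \<in> cell_contaminations m X" for t
    unfolding cell_contaminations_def
  proof (intro CollectI allI)
    fix j
    have "{i. Y t $ i $ j \<noteq> X $ i $ j} \<subseteq> {i. g i = j}" unfolding Y_def by auto
    then have "card {i. Y t $ i $ j \<noteq> X $ i $ j} \<le> card {i. g i = j}" by (simp add: card_mono)
    then show "card {i. Y t $ i $ j \<noteq> X $ i $ j} \<le> m" using fib[of j] by simp
  qed
  define one :: "real^'d" where "one = (\<chi> j. 1)"
  have one0: "one \<noteq> 0" unfolding one_def by (simp add: vec_eq_iff)
  have onei: "one \<bullet> x = (\<Sum>j\<in>UNIV. x $ j)" for x unfolding one_def by (simp add: inner_vec_def)
  have rows: "one \<bullet> (Y t $ i) = t" for t i
  proof -
    have "(\<Sum>j\<in>UNIV. Y t $ i $ j) = Y t $ i $ g i + (\<Sum>j\<in>UNIV-{g i}. Y t $ i $ j)"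
      by (simp add: sum.remove)
    also have "(\<Sum>j\<in>UNIV-{g i}. Y t $ i $ j) = (\<Sum>j\<in>UNIV-{g i}. X $ i $ j)"
      by (rule sum.cong) (auto simp: Y_def)
    finally show ?thesis unfolding onei by (simp add: Y_def)
  qed
  have muS: "one \<bullet> mu (Y t) = t" for t
  proof -
    have "mu (Y t) \<in> {x. one \<bullet> x = t}"
      by (rule part1[OF eq affine_hyperplane]) (simp add: rows)
    then show ?thesis by simp
  qed
  have unb: "\<not> (\<exists>B. \<forall>Y\<in>cell_contaminations m X. norm (mu Y - mu X) \<le> B)"
  proof
    assume "\<exists>B. \<forall>Y\<in>cell_contaminations m X. norm (mu Y - mu X) \<le> B"
    then obtain B where B: "\<And>Y. Y \<in> cell_contaminations m X \<Longrightarrow> norm (mu Y - mu X) \<le> B" by blast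
    define t where "t = real d * (B + norm (mu X)) + 1"
    have "norm (mu (Y t)) \<le> norm (mu (Y t) - mu X) + norm (mu X)" using norm_triangle_ineq[of "mu (Y t) - mu X" "mu X"] by simp
    then have nb: "norm (mu (Y t)) \<le> B + norm (mu X)" using B[OF Yc[of t]] by simp
    have "t \<le> \<bar>\<Sum>j\<in>UNIV. mu (Y t) $ j\<bar>" using muS[of t] onei by simp
    also have "\<dots> \<le> (\<Sum>j\<in>(UNIV::'d set). \<bar>mu (Y t) $ j\<bar>)" by (rule sum_abs)
    also have "\<dots> \<le> (\<Sum>j\<in>(UNIV::'d set). norm (mu (Y t)))"
      by (rule sum_mono) (rule component_le_norm_cart)
    also have "\<dots> = real d * norm (mu (Y t))" by (simp add: d_def)
    also have "\<dots> \<le> real d * (B + norm (mu X))" using nb by (simp add: mult_left_mono)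
    finally show False unfolding t_def by simp
  qed
  let ?A = "{real m / real CARD('n) | m.
            \<not> (\<exists>B. \<forall>Y\<in>cell_contaminations m X. norm (mu Y - mu X) \<le> B)}"
  have mem: "real m / real CARD('n) \<in> ?A" using unb by blast
  have bdd: "bdd_below ?A" by (rule bdd_belowI[of _ 0]) auto
  have "cellwise_breakdown mu X \<le> real m / real CARD('n)"
    unfolding cellwise_breakdown_def by (rule cInf_lower[OF mem bdd])
  then show ?thesis using rm c_def n_def d_def by simp
qed

theorem corollary1:
  fixes mu :: "real^'d^'n \<Rightarrow> real^'d"
  assumes "orth_equivariant mu"
  shows "(\<forall>(X::real^'d^'n) (S::(real^'d) set).
            affine S \<and> aff_dim S < int CARD('d) \<and> (\<forall>i. X $ i \<in> S) \<longrightarrow> mu X \<in> S)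
       \<and> (\<forall>X::real^'d^'n. cellwise_breakdown mu X
            \<le> of_int \<lceil>real CARD('n) / real CARD('d)\<rceil> / real CARD('n))"
  using part1[OF assms] part2[OF assms] by blast

end
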